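(* Let $\widetilde{\mathbb{F}}$ be a field of characteristic $p>2$, and $\mathbb{F}$ a field algebraic over $\mathbb{F}_p$. Let $f:\mathbb{F}\to\widetilde{\mathbb{F}}$ be an SD-map. Then $f$ is a field homomorphism of $\mathbb{F}$ onto its image, except when $\mathbb{F}=\mathbb{F}_5$, in which case $f$ can alternatively be only the map $w\mapsto w^3$ (with $\mathbb{F}_5$ identified with the prime subfield of $\widetilde{\mathbb{F}}$).
   Context: $\mathbb{F}_p$ denotes the field with $p$ elements. A map $f:\mathbb{F}\to\widetilde{\mathbb{F}}$ between fields is called an SD-map if for all $x\neq y$ in $\mathbb{F}$ one has $f(x)\neq f(y)$ and \[ f\left(\frac{x+y}{x-y}\right)=\frac{f(x)+f(y)}{f(x)-f(y)}. \] *)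

theory Defs
  imports "HOL-Computational_Algebra.Polynomial"
begin

definition SD_map :: "('a::field \<Rightarrow> 'b::field) \<Rightarrow> bool" where
  "SD_map f \<longleftrightarrow> (\<forall>x y. x \<noteq> y \<longrightarrow>
      f x \<noteq> f y \<and> f ((x + y) / (x - y)) = (f x + f y) / (f x - f y))"

definition algebraic_over_prime_field :: "'a::field itself \<Rightarrow> bool" where
  "algebraic_over_prime_field _ \<longleftrightarrow> (\<forall>x::'a. \<exists>q :: int poly.
      map_poly (of_int :: int \<Rightarrow> 'a) q \<noteq> 0 \<and> poly (map_poly of_int q) x = 0)"

end

theory Submission imports Defs begin

lemma SD_inj: "SD_map g \<Longrightarrow> x \<noteq> y \<Longrightarrow> g x \<noteq> g y"
  unfolding SD_map_def by blast
lemma SD_eq: "SD_map g \<Longrightarrow> x \<noteq> y \<Longrightarrow> g ((x + y) / (x - y)) = (g x + g y) / (g x - g y)"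
  unfolding SD_map_def by blast

lemma SD_0:
  fixes g :: "'a::field \<Rightarrow> 'b::field"
  assumes SD: "SD_map g" and a2: "(2::'a) \<noteq> 0" and b2: "(2::'b) \<noteq> 0"
  shows "g 0 = 0"
proof (rule ccontr)
  assume c: "g 0 \<noteq> 0"
  have n1: "(1::'a) \<noteq> -1" using a2 by (metis add_eq_0_iff equation_minus_iff one_add_one)
  have e1: "g 1 = (g 1 + g 0) / (g 1 - g 0)" using SD_eq[OF SD, of 1 0] by simp
  have e2: "g 1 = (g (-1) + g 0) / (g (-1) - g 0)" using SD_eq[OF SD, of "-1" 0] by simp
  have d1: "g 1 - g 0 \<noteq> 0" using SD_inj[OF SD, of 1 0] by simp
  have d2: "g (-1) - g 0 \<noteq> 0" using SD_inj[OF SD, of "-1" 0] by simp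
  have "(g 1 + g 0) / (g 1 - g 0) = (g (-1) + g 0) / (g (-1) - g 0)" using e1 e2 by simp
  hence "(g 1 + g 0) * (g (-1) - g 0) = (g (-1) + g 0) * (g 1 - g 0)"
    using d1 d2 by (simp add: frac_eq_eq)
  hence "2 * g 0 * (g (-1) - g 1) = 0" by (simp add: algebra_simps)
  hence "g (-1) = g 1" using c b2 by simp
  thus False using SD_inj[OF SD n1] by simp
qed

lemma SD_1:
  fixes g :: "'a::field \<Rightarrow> 'b::field"
  assumes SD: "SD_map g" and a2: "(2::'a) \<noteq> 0" and b2: "(2::'b) \<noteq> 0"
  shows "g 1 = 1"
proof -
  have "g 1 \<noteq> 0" using SD_inj[OF SD, of 1 0] SD_0[OF assms] by simp
  thus ?thesis using SD_eq[OF SD, of 1 0] SD_0[OF assms] by simp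
qed

lemma SD_neg:
  fixes g :: "'a::field \<Rightarrow> 'b::field"
  assumes SD: "SD_map g" and a2: "(2::'a) \<noteq> 0" and b2: "(2::'b) \<noteq> 0"
  shows "g (-x) = - g x"
proof (cases "x = 0")
  case True thus ?thesis using SD_0[OF assms] by simp
next
  case False
  have ne: "x \<noteq> -x" using False a2 by (metis add_eq_0_iff equation_minus_iff mult_2 mult_eq_0_iff)
  have d: "g x - g (-x) \<noteq> 0" using SD_inj[OF SD ne] by simp
  have "0 = (g x + g (-x)) / (g x - g (-x))" using SD_eq[OF SD ne] SD_0[OF assms] by simp
  thus ?thesis using d by (simp add: add_eq_0_iff)
qed

lemma SD_nz:
  fixes g :: "'a::field \<Rightarrow> 'b::field"
  assumes SD: "SD_map g" and a2: "(2::'a) \<noteq> 0" and b2: "(2::'b) \<noteq> 0"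
  shows "x \<noteq> 0 \<Longrightarrow> g x \<noteq> 0"
  using SD_inj[OF SD, of x 0] SD_0[OF assms] by simp

lemma M_inj:
  fixes s t :: "'b::field"
  assumes "(2::'b) \<noteq> 0" "s \<noteq> 1" "t \<noteq> 1" "(s + 1) / (s - 1) = (t + 1) / (t - 1)"
  shows "s = t"
proof -
  have "s - 1 \<noteq> 0" "t - 1 \<noteq> 0" using assms by auto
  hence "(s + 1) * (t - 1) = (t + 1) * (s - 1)" using assms(4) by (simp add: field_simps)
  hence "2 * (t - s) = 0" by (simp add: algebra_simps)
  thus ?thesis using assms(1) by simp
qed

lemma SD_div:
  fixes g :: "'a::field \<Rightarrow> 'b::field"
  assumes SD: "SD_map g" and a2: "(2::'a) \<noteq> 0" and b2: "(2::'b) \<noteq> 0"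
  shows "g (x / y) = g x / g y"
proof -
  note g0 = SD_0[OF assms] and g1 = SD_1[OF assms]
  consider "y = 0" | "x = y" "y \<noteq> 0" | "x \<noteq> y" "y \<noteq> 0" by blast
  thus ?thesis
  proof cases
    case 1 thus ?thesis using g0 by simp
  next
    case 2 thus ?thesis using g1 SD_nz[OF assms, of y] by simp
  next
    case 3
    have q1: "x / y \<noteq> 1" using 3 by simp
    have e1: "g ((x / y + 1) / (x / y - 1)) = (g (x/y) + 1) / (g (x/y) - 1)"
      using SD_eq[OF SD q1] g1 by simp
    have "(x / y + 1) / (x / y - 1) = (x + y) / (x - y)" using 3 by (simp add: field_simps)
    hence e2: "(g (x/y) + 1) / (g (x/y) - 1) = (g x + g y) / (g x - g y)"
      using e1 SD_eq[OF SD 3(1)] by simp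
    have gy: "g y \<noteq> 0" using SD_nz[OF assms 3(2)] .
    have "(g x / g y + 1) / (g x / g y - 1) = ((g x + g y) / g y) / ((g x - g y) / g y)" using gy
      by (simp add: field_simps)
    also have "\<dots> = (g x + g y) / (g x - g y)" using gy by simp
    finally have "(g x + g y) / (g x - g y) = (g x / g y + 1) / (g x / g y - 1)" by simp
    hence "(g (x/y) + 1) / (g (x/y) - 1) = (g x / g y + 1) / (g x / g y - 1)" using e2 by simp
    moreover have "g (x/y) \<noteq> 1" using SD_inj[OF SD q1] g1 by simp
    moreover have "g x / g y \<noteq> 1" using SD_inj[OF SD 3(1)] gy by simp
    ultimately show ?thesis using M_inj[OF b2] by blast
  qed
qed

lemma SD_mult:
  fixes g :: "'a::field \<Rightarrow> 'b::field"
  assumes SD: "SD_map g" and a2: "(2::'a) \<noteq> 0" and b2: "(2::'b) \<noteq> 0"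
  shows "g (x * y) = g x * g y"
proof -
  have "g (x * y) = g (x / (1 / y))" by simp
  also have "\<dots> = g x / (g 1 / g y)" using SD_div[OF assms] by metis
  finally show ?thesis using SD_1[OF assms] by simp
qed

lemma SD_K:
  fixes g :: "'a::field \<Rightarrow> 'b::field"
  assumes SD: "SD_map g" and a2: "(2::'a) \<noteq> 0" and b2: "(2::'b) \<noteq> 0" and ne: "x \<noteq> y"
  shows "g (x + y) * (g x - g y) = g (x - y) * (g x + g y)"
proof -
  have d1: "g x - g y \<noteq> 0" using SD_inj[OF SD ne] by simp
  have d2: "g (x - y) \<noteq> 0" using SD_nz[OF SD a2 b2] ne by simp
  have "g (x + y) / g (x - y) = (g x + g y) / (g x - g y)"
    using SD_eq[OF SD ne] SD_div[OF SD a2 b2] by simp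
  thus ?thesis using d1 d2 by (simp add: field_simps)
qed


lemma char_tr:
  assumes "CHAR('a::field) = CHAR('b::field)"
  shows "((of_nat n::'a) = 0) \<longleftrightarrow> ((of_nat n::'b) = 0)"
  using assms by (simp add: of_nat_eq_0_iff_char_dvd)

lemma char_tr_num:
  assumes "CHAR('a::field) = CHAR('b::field)"
  shows "((numeral n::'a) = 0) \<longleftrightarrow> ((numeral n::'b) = 0)"
  using char_tr[OF assms, of "numeral n"] by simp

lemma g2_cases:
  fixes g :: "'a::field \<Rightarrow> 'b::field"
  assumes SD: "SD_map g" and a2: "(2::'a) \<noteq> 0" and b2: "(2::'b) \<noteq> 0"
    and a3: "(3::'a) \<noteq> 0"
  shows "g 2 = 2 \<or> g 2 * g 2 = -1"
proof -
  note g1 = SD_1[OF SD a2 b2] and gm = SD_mult[OF SD a2 b2] and gn = SD_neg[OF SD a2 b2]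
  define c where "c = g 2"
  define A where "A = g 3"
  define B where "B = g 5"
  have n21: "(2::'a) \<noteq> 1" proof assume "(2::'a) = 1" hence "(2::'a) - 1 = 0" by simp thus False by simp qed
  have n41: "(4::'a) \<noteq> 1" proof assume "(4::'a) = 1" hence "(4::'a) - 1 = 0" by simp thus False using a3 by simp qed
  have a4: "(4::'a) \<noteq> 0" using no_zero_divisors[OF a2 a2] by simp
  have n51: "(5::'a) \<noteq> 1" proof assume "(5::'a) = 1" hence "(5::'a) - 1 = 0" by simp thus False using a4 by simp qed
  have n2m1: "(2::'a) \<noteq> -1" proof assume "(2::'a) = -1" hence "(2::'a) + 1 = 0" by simp thus False using a3 by simp qed
  have k1: "g (2+1) * (g 2 - g 1) = g (2-1) * (g 2 + g 1)" using SD_K[OF SD a2 b2 n21] .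
  have k2: "g (4+1) * (g 4 - g 1) = g (4-1) * (g 4 + g 1)" using SD_K[OF SD a2 b2 n41] .
  have k3: "g (5+1) * (g 5 - g 1) = g (5-1) * (g 5 + g 1)" using SD_K[OF SD a2 b2 n51] .
  have g4: "g 4 = c * c" unfolding c_def using gm[of 2 2] by simp
  have g6: "g 6 = c * A" unfolding c_def A_def using gm[of 2 3] by simp
  have h1: "A * (c - 1) = c + 1" using k1 g1 unfolding A_def c_def by simp
  have h2: "B * (c*c - 1) = A * (c*c + 1)" using k2 g1 g4 unfolding A_def B_def by simp
  have h3': "c * A * (B - 1) = c * c * (B + 1)" using k3 g1 g4 g6 unfolding A_def B_def
    by (simp add: mult.assoc)
  have c0: "c \<noteq> 0" unfolding c_def using SD_nz[OF SD a2 b2] a2 by simp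
  have c1: "c + 1 \<noteq> 0" unfolding c_def
  proof assume h: "g 2 + 1 = 0" have "g 2 = -1" using h by (simp add: eq_neg_iff_add_eq_0) moreover have "g (-1) = -1" using gn[of 1] g1 by simp ultimately show False using SD_inj[OF SD n2m1] by simp qed
  have h3: "A * (B - 1) = c * (B + 1)" using h3' c0 by (simp add: mult.assoc)
  have "(c - 2) * (c*c + 1) = 0" using h1 h2 h3 c1 c0 b2 by algebra
  hence "c - 2 = 0 \<or> c*c + 1 = 0" by simp
  hence "c = 2 \<or> c*c = -1" by (metis eq_iff_diff_eq_0 eq_neg_iff_add_eq_0)
  thus ?thesis unfolding c_def .
qed

lemma alg2:
  fixes u a b d e :: "'b::field"
  assumes "a*(u-1) = b*(u+1)" "d*(u-2) = e*(u+2)" "d*(a-1) = u*(a+1)" "u*(b-1) = e*(b+1)"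
    "u \<noteq> 0" "(2::'b) \<noteq> 0"
  shows "(b-(u-1))*((u+1)*b-1) = 0"
proof -
  have "u * ((a+1)*(b+1)*(u-2) - (a-1)*(b-1)*(u+2)) = 0" using assms(2-4) by algebra
  hence F: "(a+1)*(b+1)*(u-2) - (a-1)*(b-1)*(u+2) = 0" using assms(5) by simp
  have "2 * 2 * ((b-(u-1))*((u+1)*b-1)) = 0" using F assms(1) by algebra
  moreover have "(4::'b) \<noteq> 0" using no_zero_divisors[OF assms(6) assms(6)] by simp
  ultimately show ?thesis by simp
qed
lemma alg5:
  fixes u a b d e :: "'b::field"
  assumes "a*(u-1) = b*(u+1)" "d*(u+2) = e*(u-2)" "d*(a-1) = u*(a+1)" "u*(b-1) = e*(b+1)"
    "u \<noteq> 0" "(2::'b) \<noteq> 0"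
  shows "(b+(u-1))*((u+1)*b+1) = 0"
proof -
  have "u * ((a+1)*(b+1)*(u+2) - (a-1)*(b-1)*(u-2)) = 0" using assms(2-4) by algebra
  hence F: "(a+1)*(b+1)*(u+2) - (a-1)*(b-1)*(u-2) = 0" using assms(5) by simp
  have "2 * 2 * ((b+(u-1))*((u+1)*b+1)) = 0" using F assms(1) by algebra
  moreover have "(4::'b) \<noteq> 0" using no_zero_divisors[OF assms(6) assms(6)] by simp
  ultimately show ?thesis by simp
qed

lemma nat_id:
  fixes g :: "'a::field \<Rightarrow> 'b::field"
  assumes SD: "SD_map g" and a2: "(2::'a) \<noteq> 0" and b2: "(2::'b) \<noteq> 0"
    and ch: "CHAR('a) = CHAR('b)" and g2: "g 2 = 2"
  shows "g (of_nat n) = of_nat n"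
proof -
  note g0 = SD_0[OF SD a2 b2] and g1 = SD_1[OF SD a2 b2]
  have "g (of_nat n) = of_nat n \<and> g (of_nat n + 1) = of_nat n + 1"
  proof (induction n)
    case 0 show ?case using g0 g1 by simp
  next
    case (Suc n)
    have "g (of_nat n + 2) = of_nat n + 2"
    proof (cases "(of_nat n::'a) = 0")
      case True
      hence "(of_nat n::'b) = 0" using char_tr[OF ch] by blast
      thus ?thesis using True g2 by simp
    next
      case False
      hence nb: "(of_nat n::'b) \<noteq> 0" using char_tr[OF ch] by blast
      have ne: "(of_nat n + 1::'a) \<noteq> 1" using False by simp
      have k: "g (of_nat n + 1 + 1) * (g (of_nat n + 1) - g 1) = g (of_nat n + 1 - 1) * (g (of_nat n + 1) + g 1)"
        using SD_K[OF SD a2 b2 ne] .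
      have e1: "(of_nat n + 1 + 1 :: 'a) = of_nat n + 2" by simp
      have e2: "(of_nat n + 1 - 1 :: 'a) = of_nat n" by simp
      have "g (of_nat n + 2) * of_nat n = of_nat n * (of_nat n + 2)"
        using k Suc.IH g1 unfolding e1 e2 by (simp add: add.assoc)
      thus ?thesis using nb by (simp add: mult.commute)
    qed
    moreover have "(of_nat (Suc n)::'a) = of_nat n + 1" "(of_nat (Suc n)::'b) = of_nat n + 1"
      "(of_nat n + 1 + 1::'a) = of_nat n + 2" "(of_nat n + 1 + 1::'b) = of_nat n + 2" by simp_all
    ultimately show ?case using Suc.IH by metis
  qed
  thus ?thesis by simp
qed

lemma int_id:
  fixes g :: "'a::field \<Rightarrow> 'b::field"
  assumes SD: "SD_map g" and a2: "(2::'a) \<noteq> 0" and b2: "(2::'b) \<noteq> 0"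
    and ch: "CHAR('a) = CHAR('b)" and g2: "g 2 = 2"
  shows "g (of_int k) = of_int k"
proof (cases k rule: int_cases)
  case (nonneg n) thus ?thesis using nat_id[OF assms] by simp
next
  case (neg n) thus ?thesis using nat_id[OF assms, of "Suc n"] SD_neg[OF SD a2 b2, of "of_nat (Suc n)"]
    by (simp del: of_nat_Suc)
qed

lemma half:
  assumes "CHAR('a::field) = p" "prime p" "p > 2"
  shows "\<exists>k::int. 2 * (of_int k::'a) = -1"
proof -
  have "odd p" using assms prime_odd_nat by blast
  then obtain m where m: "p = 2*m + 1" by (metis oddE)
  have "(of_nat p::'a) = 0" unfolding assms(1)[symmetric] by (rule of_nat_CHAR)
  hence "2 * (of_int (int m)::'a) = -1" using m by (simp add: eq_neg_iff_add_eq_0 add.commute)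
  thus ?thesis by blast
qed

lemma notP_shift:
  assumes "\<forall>k::int. x \<noteq> (of_int k::'a::field)"
  shows "\<forall>k::int. x + of_int j \<noteq> of_int k"
proof
  fix k :: int
  show "x + of_int j \<noteq> of_int k"
  proof
    assume "x + of_int j = of_int k"
    hence "x = of_int (k - j)" by (simp add: algebra_simps)
    thus False using assms by blast
  qed
qed

lemma Lgen:
  fixes g :: "'a::field \<Rightarrow> 'b::field"
  assumes SD: "SD_map g" and a2: "(2::'a) \<noteq> 0" and b2: "(2::'b) \<noteq> 0"
    and notP: "\<forall>k::int. x \<noteq> of_int k"
  shows "g (x+1) * (g x - 1) = g (x-1) * (g x + 1)"
    and "g (x+2) * (g x - g 2) = g (x-2) * (g x + g 2)"
    and "g (x+2) * (g (x+1) - 1) = g x * (g (x+1) + 1)"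
    and "g x * (g (x-1) - 1) = g (x-2) * (g (x-1) + 1)"
    and "g x \<noteq> 0"
proof -
  note g1 = SD_1[OF SD a2 b2]
  have x0: "x \<noteq> 0" using notP[rule_format, of 0] by simp
  have x1: "x \<noteq> 1" using notP[rule_format, of 1] by simp
  have x2: "x \<noteq> 2" using notP[rule_format, of 2] by simp
  have x11: "x + 1 \<noteq> 1" using x0 by simp
  have xm11: "x - 1 \<noteq> 1" using x2 by (simp add: eq_diff_eq)
  show "g (x+1) * (g x - 1) = g (x-1) * (g x + 1)" using SD_K[OF SD a2 b2 x1] g1 by simp
  show "g (x+2) * (g x - g 2) = g (x-2) * (g x + g 2)" using SD_K[OF SD a2 b2 x2] by simp
  have e1: "x + 1 + 1 = x + 2" "x + 1 - 1 = x" by simp_all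
  show "g (x+2) * (g (x+1) - 1) = g x * (g (x+1) + 1)" using SD_K[OF SD a2 b2 x11] g1
    unfolding e1 by simp
  have e2: "x - 1 + 1 = x" "x - 1 - 1 = x - 2" by simp_all
  show "g x * (g (x-1) - 1) = g (x-2) * (g (x-1) + 1)" using SD_K[OF SD a2 b2 xm11] g1
    unfolding e2 by simp
  show "g x \<noteq> 0" using SD_nz[OF SD a2 b2 x0] .
qed

lemma add1:
  fixes g :: "'a::field \<Rightarrow> 'b::field"
  assumes SD: "SD_map g" and a2: "(2::'a) \<noteq> 0" and b2: "(2::'b) \<noteq> 0"
    and hf: "\<exists>k::int. 2 * (of_int k::'a) = -1"
    and id: "\<And>k. g (of_int k) = of_int k"
  shows "g (x + 1) = g x + 1"
proof (cases "\<exists>k::int. x = of_int k")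
  case True
  then obtain k where "x = of_int k" by blast
  thus ?thesis using id[of k] id[of "k+1"] by simp
next
  case False
  hence nP: "\<forall>k::int. x \<noteq> of_int k" by blast
  have nP1: "\<forall>k::int. x + 1 \<noteq> of_int k" using notP_shift[OF nP, of 1] by simp
  have g2: "g 2 = 2" using id[of 2] by simp
  have g1: "g 1 = 1" using id[of 1] by simp
  define u where "u = g x"
  define a where "a = g (x+1)"
  define b where "b = g (x-1)"
  note L = Lgen[OF SD a2 b2 nP]
  have Lx: "(b-(u-1))*((u+1)*b-1) = 0"
    using alg2[OF L(1) L(2)[unfolded g2] L(3) L(4) L(5) b2] unfolding u_def a_def b_def .
  note L' = Lgen[OF SD a2 b2 nP1]
  have ee: "x + 1 - 1 = x" "x + 1 + 1 = x + 2" "x + 1 + 2 = x + 3" "x + 1 - 2 = x - 1" by simp_all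
  have Lx1: "(u-(a-1))*((a+1)*u-1) = 0"
    using alg2[OF L'(1) L'(2)[unfolded g2] L'(3) L'(4) L'(5) b2] unfolding u_def a_def b_def ee .
  have E1: "a*(u-1) = b*(u+1)" using L(1) unfolding u_def a_def b_def .
  have u1: "u \<noteq> 1" unfolding u_def using SD_inj[OF SD, of x 1] nP[rule_format, of 1] g1 by auto
  show ?thesis
  proof (cases "u = a - 1")
    case True thus ?thesis unfolding u_def a_def by simp
  next
    case False
    hence h1: "(a+1)*u = 1" using Lx1 by simp
    show ?thesis
    proof (cases "b = u - 1")
      case True
      hence "a * (u-1) = (u+1)*(u-1)" using E1 by simp
      hence "a = u + 1" using u1 by simp
      thus ?thesis unfolding u_def a_def by simp
    next
      case False
      hence "(u+1)*b = 1" using Lx by simp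
      hence "a*(u-1) = 1" using E1 by (simp add: mult.commute)
      hence "a = -u" using h1 by algebra
      hence "g (x+1) = g (-x)" unfolding a_def u_def using SD_neg[OF SD a2 b2] by simp
      hence "x + 1 = -x" using SD_inj[OF SD] by blast
      hence "2 * x = -1" by algebra
      moreover obtain k where "2 * of_int k = (-1::'a)" using hf by blast
      ultimately have "2 * x = 2 * of_int k" by simp
      hence "x = of_int k" using a2 by simp
      thus ?thesis using nP by blast
    qed
  qed
qed


lemma cube_all:
  fixes g :: "'a::field \<Rightarrow> 'b::field" and x :: 'a
  assumes SD: "SD_map g" and a2: "(2::'a) \<noteq> 0" and b2: "(2::'b) \<noteq> 0"
    and hf: "\<exists>k::int. 2 * (of_int k::'a) = -1"
    and g2: "g 2 = -2"
  shows "\<exists>k::int. x = of_int k"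
proof (rule ccontr)
  assume "\<not> (\<exists>k::int. x = of_int k)"
  hence nP: "\<forall>k::int. x \<noteq> of_int k" by blast
  have nP1: "\<forall>k::int. x + 1 \<noteq> of_int k" using notP_shift[OF nP, of 1] by simp
  note g1 = SD_1[OF SD a2 b2] and gn = SD_neg[OF SD a2 b2]
  define u where "u = g x"
  define a where "a = g (x+1)"
  define b where "b = g (x-1)"
  note L = Lgen[OF SD a2 b2 nP]
  have L2: "g (x+2) * (g x + 2) = g (x-2) * (g x - 2)" using L(2) g2 by simp
  have Lx: "(b+(u-1))*((u+1)*b+1) = 0"
    using alg5[OF L(1) L2 L(3) L(4) L(5) b2] unfolding u_def a_def b_def .
  note L' = Lgen[OF SD a2 b2 nP1]
  have ee: "x + 1 - 1 = x" "x + 1 + 1 = x + 2" "x + 1 + 2 = x + 3" "x + 1 - 2 = x - 1" by simp_all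
  have L2': "g (x+1+2) * (g (x+1) + 2) = g (x+1-2) * (g (x+1) - 2)" using L'(2) g2 by simp
  have Lx1: "(u+(a-1))*((a+1)*u+1) = 0"
    using alg5[OF L'(1) L2' L'(3) L'(4) L'(5) b2] unfolding u_def a_def b_def ee .
  have E1: "a*(u-1) = b*(u+1)" using L(1) unfolding u_def a_def b_def .
  have u0: "u \<noteq> 0" using L(5) unfolding u_def .
  have u1: "u \<noteq> 1" unfolding u_def using SD_inj[OF SD, of x 1] nP[rule_format, of 1] g1 by auto
  have um1: "u \<noteq> -1" unfolding u_def using SD_inj[OF SD, of x "-1"] nP[rule_format, of "-1"] g1 gn[of 1]
    by auto
  have u2: "u \<noteq> 2" unfolding u_def using SD_inj[OF SD, of x "-2"] nP[rule_format, of "-2"] g2 gn[of 2]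
    by auto
  have noth: "a \<noteq> -u"
  proof
    assume "a = -u"
    hence "g (x+1) = g (-x)" unfolding a_def u_def using gn by simp
    hence "x + 1 = -x" using SD_inj[OF SD] by blast
    hence "2 * x = -1" by algebra
    moreover obtain k where "2 * of_int k = (-1::'a)" using hf by blast
    ultimately have "2 * x = 2 * of_int k" by simp
    hence "x = of_int k" using a2 by simp
    thus False using nP by blast
  qed
  show False
  proof (cases "b + (u-1) = 0")
    case True
    have "(u-1)*(a+u+1) = 0" using True E1 by algebra
    hence ha: "a = -u-1" using u1 by algebra
    hence "u + (a-1) \<noteq> 0" using b2 by simp
    hence "(a+1)*u+1 = 0" using Lx1 by simp
    hence "(u-1)*(u+1) = 0" using ha by algebra
    thus False using u1 um1 by (simp add: eq_neg_iff_add_eq_0)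
  next
    case False
    hence hb: "(u+1)*b+1 = 0" using Lx by simp
    hence ha: "a*(u-1)+1 = 0" using E1 by algebra
    show False
    proof (cases "u + (a-1) = 0")
      case True
      hence "u*(u-2) = 0" using ha by algebra
      thus False using u0 u2 by simp
    next
      case False
      hence "(a+1)*u+1 = 0" using Lx1 by simp
      hence "a = -u" using ha by algebra
      thus False using noth by simp
    qed
  qed
qed


lemma five_facts:
  assumes "CHAR('a::field) = 5"
  shows "(1::'a) \<noteq> 0" "(2::'a) \<noteq> 0" "(3::'a) \<noteq> 0" "(4::'a) \<noteq> 0" "(5::'a) = 0"
proof -
  have nz: "(of_nat k::'a) \<noteq> 0" if "0 < k" "k < 5" for k
    using that assms by (auto simp: of_nat_eq_0_iff_char_dvd dest: dvd_imp_le)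
  show "(1::'a) \<noteq> 0" by simp
  show "(2::'a) \<noteq> 0" using nz[of 2] by simp
  show "(3::'a) \<noteq> 0" using nz[of 3] by simp
  show "(4::'a) \<noteq> 0" using nz[of 4] by simp
  show "(5::'a) = 0" using of_nat_CHAR[where 'a='a] assms by simp
qed

lemma five_card:
  assumes ch: "CHAR('a::field) = 5" and all: "\<forall>x::'a. \<exists>k::int. x = of_int k"
  shows "card (UNIV::'a set) = 5"
proof -
  note f = five_facts[OF ch]
  have U: "UNIV = {0,1,2,3,4::'a}"
  proof (rule set_eqI, rule iffI)
    fix x :: 'a
    obtain k where xk: "x = of_int k" using all by blast
    define m where "m = k mod 5"
    have "k = 5 * (k div 5) + m" unfolding m_def by simp
    hence "(of_int k::'a) = 5 * of_int (k div 5) + of_int m" by (metis of_int_add of_int_mult of_int_numeral)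
    hence xm: "x = of_int m" using xk f(5) by simp
    have "0 \<le> m" "m < 5" unfolding m_def by simp_all
    hence "m = 0 \<or> m = 1 \<or> m = 2 \<or> m = 3 \<or> m = 4" by arith
    thus "x \<in> {0,1,2,3,4}" using xm by auto
  qed simp
  have d: "\<And>x y::'a. x - y \<noteq> 0 \<Longrightarrow> y \<noteq> x" by auto
  have "(0::'a) \<noteq> 1" "(0::'a) \<noteq> 2" "(0::'a) \<noteq> 3" "(0::'a) \<noteq> 4"
    "(1::'a) \<noteq> 2" "(1::'a) \<noteq> 3" "(1::'a) \<noteq> 4" "(2::'a) \<noteq> 3" "(2::'a) \<noteq> 4" "(3::'a) \<noteq> 4"
    by (rule d, simp add: f)+
  thus ?thesis unfolding U by simp
qed


theorem theorem3p3:
  fixes f :: "'a::field \<Rightarrow> 'b::field" and p :: nat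
  assumes "prime p" and "p > 2"
    and "CHAR('b) = p" and "CHAR('a) = p"
    and "algebraic_over_prime_field TYPE('a)"
    and "SD_map f"
  shows "((\<forall>x y. f (x + y) = f x + f y \<and> f (x * y) = f x * f y) \<and> f 1 = 1)
     \<or> (card (UNIV :: 'a set) = 5 \<and> (\<forall>n::nat. f (of_nat n) = (of_nat n) ^ 3))"
proof -
  note SD = assms(6)
  have ch: "CHAR('a) = CHAR('b)" using assms(3,4) by simp
  have a2: "(2::'a) \<noteq> 0"
    using assms(2,4) of_nat_eq_0_iff_char_dvd[where 'a='a, of 2] by (auto dest: dvd_imp_le)
  have b2: "(2::'b) \<noteq> 0"
    using assms(2,3) of_nat_eq_0_iff_char_dvd[where 'a='b, of 2] by (auto dest: dvd_imp_le)
  note g0 = SD_0[OF SD a2 b2] and g1 = SD_1[OF SD a2 b2] and gn = SD_neg[OF SD a2 b2]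
    and gm = SD_mult[OF SD a2 b2]
  have hf: "\<exists>k::int. 2 * (of_int k::'a) = -1" using half[OF assms(4,1,2)] .
  have cases: "f 2 = 2 \<or> (f 2 = -2 \<and> (5::'a) = 0 \<and> (5::'b) = 0)"
  proof (cases "(3::'a) = 0")
    case True
    hence b3: "(3::'b) = 0" using char_tr[OF ch, of 3] by simp
    have "(2::'a) = -1" using True by (simp add: eq_neg_iff_add_eq_0)
    hence "f 2 = f (-1)" by (rule arg_cong)
    hence "f 2 = -1" using gn[of 1] g1 by simp
    moreover have "(2::'b) = -1" using b3 by (simp add: eq_neg_iff_add_eq_0)
    ultimately show ?thesis by simp
  next
    case False
    from g2_cases[OF SD a2 b2 False] show ?thesis
    proof
      assume sq: "f 2 * f 2 = -1"
      have "f 4 = f 2 * f 2" using gm[of 2 2] by simp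
      hence "f 4 = f (-1)" using sq gn[of 1] g1 by simp
      hence "(4::'a) = -1" using SD_inj[OF SD] by blast
      hence a5: "(5::'a) = 0" by (simp add: eq_neg_iff_add_eq_0)
      hence b5: "(5::'b) = 0" using char_tr[OF ch, of 5] by simp
      have "(f 2 - 2) * (f 2 + 2) = f 2 * f 2 - 4" by algebra
      also have "\<dots> = - 5" using sq by simp
      finally have "(f 2 - 2) * (f 2 + 2) = 0" using b5 by simp
      hence "f 2 = 2 \<or> f 2 = -2" by (simp add: eq_neg_iff_add_eq_0)
      thus ?thesis using a5 b5 by blast
    qed simp
  qed
  show ?thesis
  proof (cases "f 2 = 2")
    case True
    have id: "\<And>k. f (of_int k) = of_int k" using int_id[OF SD a2 b2 ch True] .
    have a1: "\<And>x. f (x + 1) = f x + 1" using add1[OF SD a2 b2 hf id] .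
    have add: "f (x + y) = f x + f y" for x y
    proof (cases "y = 0")
      case True thus ?thesis using g0 by simp
    next
      case False
      have "x + y = y * (x / y + 1)" using False by (simp add: field_simps)
      hence "f (x + y) = f y * (f (x / y) + 1)" using gm a1 by simp
      also have "\<dots> = f y * (f x / f y + 1)" using SD_div[OF SD a2 b2] by simp
      also have "\<dots> = f x + f y" using SD_nz[OF SD a2 b2 False] by (simp add: field_simps)
      finally show ?thesis .
    qed
    show ?thesis using add gm g1 by blast
  next
    case False
    hence g2: "f 2 = -2" and a5: "(5::'a) = 0" and b5: "(5::'b) = 0" using cases by auto
    have p5: "p = 5"
    proof -
      have "p dvd 5" using a5 assms(4) of_nat_eq_0_iff_char_dvd[where 'a='a, of 5] by simp
      hence "p \<le> 5" by (rule dvd_imp_le) simp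
      hence "p = 3 \<or> p = 4 \<or> p = 5" using assms(2) by arith
      thus ?thesis using \<open>p dvd 5\<close> by auto
    qed
    have all: "\<forall>x::'a. \<exists>k::int. x = of_int k" using cube_all[OF SD a2 b2 hf g2] by blast
    have card: "card (UNIV::'a set) = 5" using five_card[OF _ all] assms(4) p5 by simp
    have cube: "f (of_nat n) = (of_nat n) ^ 3" for n
    proof -
      define m where "m = n mod 5"
      have nm: "n = 5 * (n div 5) + m" unfolding m_def by simp
      have ea: "(of_nat n::'a) = of_nat m"
        using a5 by (subst nm, simp only: of_nat_add of_nat_mult of_nat_numeral) simp
      have eb: "(of_nat n::'b) = of_nat m"
        using b5 by (subst nm, simp only: of_nat_add of_nat_mult of_nat_numeral) simp
      have "m < 5" unfolding m_def by simp
      hence "m = 0 \<or> m = 1 \<or> m = 2 \<or> m = 3 \<or> m = 4" by arith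
      moreover have "f 3 = 2"
      proof -
        have "(3::'a) = -2" using a5 by (simp add: eq_neg_iff_add_eq_0)
        hence "f 3 = f (-2)" by (rule arg_cong)
        thus ?thesis using gn[of 2] g2 by simp
      qed
      moreover have "f 4 = -1"
      proof -
        have "(4::'a) = -1" using a5 by (simp add: eq_neg_iff_add_eq_0)
        hence "f 4 = f (-1)" by (rule arg_cong)
        thus ?thesis using gn[of 1] g1 by simp
      qed
      moreover have "(2::'b)^3 = -2"
      proof -
        have "(2::'b)^3 + 2 = 2 * 5" by simp
        thus ?thesis using b5 by (simp add: eq_neg_iff_add_eq_0)
      qed
      moreover have "(3::'b)^3 = 2"
      proof -
        have "(3::'b)^3 = 5 * 5 + 2" by simp
        thus ?thesis using b5 by simp
      qed
      moreover have "(4::'b)^3 = -1"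
      proof -
        have "(4::'b)^3 + 1 = 13 * 5" by simp
        thus ?thesis using b5 by (simp add: eq_neg_iff_add_eq_0)
      qed
      ultimately show ?thesis unfolding ea eb using g0 g1 g2 by auto
    qed
    show ?thesis using card cube by blast
  qed
qed

end
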